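(* Fix $\beta\in(0,1]$, $\lambda>0$, $p\in(1/2,1)$, trip data $\underline{x}\le\overline{x}$, $b<0$, $u_0\in\mathbb{R}$, and tariff bounds $0<\underline{\gamma}<\overline{\gamma}$ such that $\underline{x}+b\gamma\le u_0\le \overline{x}+b\gamma$ for all $\gamma\in[\underline{\gamma},\overline{\gamma}]$. For $\alpha>0$ let $\Gamma^*(\alpha)=\arg\max_{\gamma\in[\underline{\gamma},\overline{\gamma}]} f(\gamma;\alpha)$, with $f$ the expected revenue defined in the context (all parameters other than $\alpha$ held fixed). Then for $0<\alpha_1<\alpha_2$ we have $\max\Gamma^*(\alpha_2)\le\max\Gamma^*(\alpha_1)$ and $\min\Gamma^*(\alpha_2)\le\min\Gamma^*(\alpha_1)$. In particular, whenever the optimal tariff $\gamma^*(\alpha)$ is unique, it is monotonically nonincreasing in $\alpha$.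
   Context: Setting: a passenger chooses between a shared mobility service (SMoDS) and a certain alternative with objective utility $u_0$. At tariff $\gamma$, the SMoDS has two possible objective utilities, the worst case $\underline{u}(\gamma)=\underline{x}+b\gamma$ occurring with probability $p$ and the best case $\overline{u}(\gamma)=\overline{x}+b\gamma$ occurring with probability $1-p$. Probability weighting function: $\pi(q)=e^{-(-\ln q)^{\alpha}}$ for $q\in(0,1]$, $\pi(0)=0$. The reference point is the best-case outcome, $R=\overline{u}(\gamma)$, and the value function is $V(u)=(u-R)^{\beta}$ if $u\ge R$ and $V(u)=-\lambda(R-u)^{\beta}$ if $u<R$. Subjective utilities: $A^s=V(u_0)=-\lambda(\overline{u}-u_0)^{\beta}$ for the alternative, and $U^s=\pi(p)V(\underline{u})+\pi(1-p)V(\overline{u})=-\lambda\,\pi(p)(\overline{u}-\underline{u})^{\beta}$ for the SMoDS. Acceptance probability $p_s(\gamma)=e^{U^s}/(e^{U^s}+e^{A^s})$, i.e. $p_s(\gamma)=\big(1+\exp\{\lambda(\pi(p)(\overline{x}-\underline{x})^{\beta}-(\overline{x}+b\gamma-u_0)^{\beta})\}\big)^{-1}$. Expected revenue $f(\gamma)=\gamma\,p_s(\gamma)$, maximized over $\gamma\in[\underline{\gamma},\overline{\gamma}]$. *)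

theory Defs
  imports "HOL-Analysis.Analysis"
begin

definition prelec :: "real \<Rightarrow> real \<Rightarrow> real" where
  "prelec \<alpha> q = (if q = 0 then 0 else exp (- ((- ln q) powr \<alpha>)))"

definition accept_prob ::
  "real \<Rightarrow> real \<Rightarrow> real \<Rightarrow> real \<Rightarrow> real \<Rightarrow> real \<Rightarrow> real \<Rightarrow> real \<Rightarrow> real \<Rightarrow> real" where
  "accept_prob \<alpha> \<beta> lam p xl xu b u0 \<gamma> =
     1 / (1 + exp (lam * (prelec \<alpha> p * (xu - xl) powr \<beta> - (xu + b * \<gamma> - u0) powr \<beta>)))"

definition exp_revenue ::
  "real \<Rightarrow> real \<Rightarrow> real \<Rightarrow> real \<Rightarrow> real \<Rightarrow> real \<Rightarrow> real \<Rightarrow> real \<Rightarrow> real \<Rightarrow> real" where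
  "exp_revenue \<alpha> \<beta> lam p xl xu b u0 \<gamma> = \<gamma> * accept_prob \<alpha> \<beta> lam p xl xu b u0 \<gamma>"

definition opt_tariffs ::
  "real \<Rightarrow> real \<Rightarrow> real \<Rightarrow> real \<Rightarrow> real \<Rightarrow> real \<Rightarrow> real \<Rightarrow> real \<Rightarrow> real \<Rightarrow> real \<Rightarrow> real set" where
  "opt_tariffs \<alpha> \<beta> lam p xl xu b u0 gl gu =
     {\<gamma> \<in> {gl..gu}. \<forall>\<gamma>' \<in> {gl..gu}.
        exp_revenue \<alpha> \<beta> lam p xl xu b u0 \<gamma>' \<le> exp_revenue \<alpha> \<beta> lam p xl xu b u0 \<gamma>}"

end

theory Submission
  imports Defs
begin

lemma key_ineq:
  fixes g1 g2 X Y a1 a2 :: real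
  assumes "0 \<le> X" "X \<le> Y" "0 \<le> g1" "g1 \<le> g2" "0 < a2"
  shows "(a2*(1+X*g1) - a1*(1+X*g2)) * (1+Y*g2) \<ge> (a2*(1+Y*g1) - a1*(1+Y*g2)) * (1+X*g2)"
proof -
  have "(a2*(1+X*g1) - a1*(1+X*g2)) * (1+Y*g2) - (a2*(1+Y*g1) - a1*(1+Y*g2)) * (1+X*g2)
        = a2 * ((Y-X)*(g2-g1))" by (simp add: algebra_simps)
  moreover have "a2 * ((Y-X)*(g2-g1)) \<ge> 0" using assms by simp
  ultimately show ?thesis by linarith
qed

lemma frac_le_iff:
  fixes a1 a2 d1 d2 :: real
  assumes "0 < d1" "0 < d2"
  shows "a1/d1 \<le> a2/d2 \<longleftrightarrow> a1*d2 \<le> a2*d1"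
  using assms by (simp add: divide_simps)

lemma generic:
  fixes g :: "real\<Rightarrow>real" and X Y gl gu :: real
  assumes gl: "0<gl" "gl \<le> gu" and cont: "continuous_on {gl..gu} g"
    and mono: "\<forall>x\<in>{gl..gu}. \<forall>y\<in>{gl..gu}. x\<le>y \<longrightarrow> g x \<le> g y"
    and gpos: "\<forall>x\<in>{gl..gu}. 0 \<le> g x" and XY: "0 \<le> X" "X \<le> Y"
  defines "Op \<equiv> \<lambda>Z. {\<gamma>\<in>{gl..gu}. \<forall>\<gamma>'\<in>{gl..gu}. \<gamma>'/(1+Z*g \<gamma>') \<le> \<gamma>/(1+Z*g \<gamma>)}"
  shows "Sup (Op X) \<in> Op X \<and> Inf (Op X) \<in> Op X
       \<and> Sup (Op Y) \<in> Op Y \<and> Inf (Op Y) \<in> Op Y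
       \<and> Sup (Op Y) \<le> Sup (Op X) \<and> Inf (Op Y) \<le> Inf (Op X)"
proof -
  define S where "S = {gl..gu}"
  have props: "Op Z \<noteq> {} \<and> closed (Op Z) \<and> bdd_above (Op Z) \<and> bdd_below (Op Z)" if Z: "0 \<le> Z" for Z
  proof -
    define F where "F = (\<lambda>\<gamma>. \<gamma>/(1+Z*g \<gamma>))"
    have cF: "continuous_on S F" unfolding F_def S_def
      using cont Z gpos
      apply (intro continuous_intros)
      apply auto
      subgoal for \<gamma>
      proof -
        assume h: "\<forall>x\<in>{gl..gu}. 0 \<le> g x" "1 + Z * g \<gamma> = 0" "gl \<le> \<gamma>" "\<gamma> \<le> gu" "0 \<le> Z"
        have "0 \<le> Z * g \<gamma>" using h by simp
        thus False using h by linarith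
      qed
      done
    obtain m where m: "m \<in> S" "\<forall>y\<in>S. F y \<le> F m"
      using continuous_attains_sup[OF _ _ cF] gl unfolding S_def by auto
    have eq: "Op Z = S \<inter> F -` {F m..}"
      using m unfolding Op_def F_def S_def by (auto intro: order_trans)
    have "closed (Op Z)" unfolding eq
      by (rule continuous_closed_preimage[OF cF]) (auto simp: S_def)
    moreover have "Op Z \<noteq> {}" using m eq by auto
    moreover have "Op Z \<subseteq> S" unfolding Op_def S_def by auto
    ultimately show ?thesis unfolding S_def
      by (meson bdd_above_Icc bdd_below_Icc bdd_above_mono bdd_below_mono)
  qed
  have inS: "Op Z \<subseteq> {gl..gu}" for Z unfolding Op_def by auto
  have mem: "Sup (Op Z) \<in> Op Z \<and> Inf (Op Z) \<in> Op Z" if "0 \<le> Z" for Z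
    using props[OF that] closed_contains_Sup[of "Op Z"] closed_contains_Inf[of "Op Z"] by blast
  have topkis: "max a1 a2 \<in> Op X \<and> min a1 a2 \<in> Op Y" if a1: "a1 \<in> Op X" and a2: "a2 \<in> Op Y" for a1 a2
  proof (cases "a1 \<le> a2")
    case False
    then show ?thesis using a1 a2 by (simp add: max_def min_def)
  next
    case True
    have s1: "a1 \<in> {gl..gu}" "a2 \<in> {gl..gu}" using a1 a2 inS[of X] inS[of Y] by blast+
    hence pos: "0 < a1" "0 < a2" using gl by auto
    have g12: "0 \<le> g a1" "g a1 \<le> g a2" using mono gpos s1 True by auto
    have dp: "0 < 1+Z*g a" if "0 \<le> Z" "a \<in> {gl..gu}" for Z a
      using that gpos by (simp add: add_pos_nonneg)
    have dX1: "0 < 1+X*g a1" and dX2: "0 < 1+X*g a2" and dY1: "0 < 1+Y*g a1" and dY2: "0 < 1+Y*g a2"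
      using dp s1 XY by auto
    have K: "(a2*(1+X*g a1) - a1*(1+X*g a2)) * (1+Y*g a2) \<ge> (a2*(1+Y*g a1) - a1*(1+Y*g a2)) * (1+X*g a2)"
      by (rule key_ineq) (use XY g12 pos in auto)
    have Y12: "a1/(1+Y*g a1) \<le> a2/(1+Y*g a2)" using a2 s1 unfolding Op_def by auto
    hence "a2*(1+Y*g a1) - a1*(1+Y*g a2) \<ge> 0" using frac_le_iff[OF dY1 dY2] by (simp add: algebra_simps)
    hence "(a2*(1+Y*g a1) - a1*(1+Y*g a2)) * (1+X*g a2) \<ge> 0" using dX2 by simp
    hence "(a2*(1+X*g a1) - a1*(1+X*g a2)) * (1+Y*g a2) \<ge> 0" using K by linarith
    hence "a2*(1+X*g a1) - a1*(1+X*g a2) \<ge> 0" using dY2 by (simp add: zero_le_mult_iff)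
    hence X12: "a1/(1+X*g a1) \<le> a2/(1+X*g a2)" using frac_le_iff[OF dX1 dX2] by (simp add: algebra_simps)
    have X21: "a2/(1+X*g a2) \<le> a1/(1+X*g a1)" using a1 s1 unfolding Op_def by auto
    have "a2*(1+X*g a1) - a1*(1+X*g a2) \<le> 0" using X21 frac_le_iff[OF dX2 dX1] by (simp add: algebra_simps)
    hence "(a2*(1+X*g a1) - a1*(1+X*g a2)) * (1+Y*g a2) \<le> 0" using dY2 by (simp add: mult_nonpos_nonneg)
    hence "(a2*(1+Y*g a1) - a1*(1+Y*g a2)) * (1+X*g a2) \<le> 0" using K by linarith
    hence "a2*(1+Y*g a1) - a1*(1+Y*g a2) \<le> 0" using dX2 by (simp add: mult_le_0_iff)
    hence Y21: "a2/(1+Y*g a2) \<le> a1/(1+Y*g a1)" using frac_le_iff[OF dY2 dY1] by (simp add: algebra_simps)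
    have "a2 \<in> Op X" using a1 s1 X12 unfolding Op_def by (auto intro: order_trans)
    moreover have "a1 \<in> Op Y" using a2 s1 Y21 unfolding Op_def by (auto intro: order_trans)
    ultimately show ?thesis using True by (simp add: max_def min_def)
  qed
  have mX: "Sup (Op X) \<in> Op X \<and> Inf (Op X) \<in> Op X" using mem XY by simp
  have mY: "Sup (Op Y) \<in> Op Y \<and> Inf (Op Y) \<in> Op Y" using mem XY by simp
  have pX: "bdd_above (Op X)" "bdd_below (Op X)" using props XY by auto
  have pY: "bdd_above (Op Y)" "bdd_below (Op Y)" using props XY by auto
  have "max (Sup (Op X)) (Sup (Op Y)) \<in> Op X" using topkis mX mY by blast
  hence "max (Sup (Op X)) (Sup (Op Y)) \<le> Sup (Op X)" using pX cSup_upper by blast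
  hence s: "Sup (Op Y) \<le> Sup (Op X)" by simp
  have "min (Inf (Op X)) (Inf (Op Y)) \<in> Op Y" using topkis mX mY by blast
  hence "Inf (Op Y) \<le> min (Inf (Op X)) (Inf (Op Y))" using pY cInf_lower by blast
  hence i: "Inf (Op Y) \<le> Inf (Op X)" by simp
  show ?thesis using mX mY s i by blast
qed

theorem mainTheorem2:
  fixes \<alpha>1 \<alpha>2 \<beta> lam p xl xu b u0 gl gu :: real
  assumes "0 < \<beta>" "\<beta> \<le> 1" "0 < lam" "1/2 < p" "p < 1"
    and "xl \<le> xu" "b < 0" "0 < gl" "gl < gu"
    and "\<forall>\<gamma> \<in> {gl..gu}. xl + b * \<gamma> \<le> u0 \<and> u0 \<le> xu + b * \<gamma>"
    and "0 < \<alpha>1" "\<alpha>1 < \<alpha>2"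
  defines "G \<equiv> (\<lambda>\<alpha>. opt_tariffs \<alpha> \<beta> lam p xl xu b u0 gl gu)"
  shows "Sup (G \<alpha>1) \<in> G \<alpha>1 \<and> Inf (G \<alpha>1) \<in> G \<alpha>1
       \<and> Sup (G \<alpha>2) \<in> G \<alpha>2 \<and> Inf (G \<alpha>2) \<in> G \<alpha>2
       \<and> Sup (G \<alpha>2) \<le> Sup (G \<alpha>1) \<and> Inf (G \<alpha>2) \<le> Inf (G \<alpha>1)
       \<and> (\<forall>g1 g2. G \<alpha>1 = {g1} \<and> G \<alpha>2 = {g2} \<longrightarrow> g2 \<le> g1)"
  proof -
  define X where "X = (\<lambda>\<alpha>. exp (lam * (prelec \<alpha> p * (xu - xl) powr \<beta>)))"
  define g where "g = (\<lambda>\<gamma>::real. exp (- (lam * (xu + b * \<gamma> - u0) powr \<beta>)))"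
  have rev: "exp_revenue \<alpha> \<beta> lam p xl xu b u0 \<gamma> = \<gamma> / (1 + X \<alpha> * g \<gamma>)" for \<alpha> \<gamma>
  proof -
    have "lam * (prelec \<alpha> p * (xu - xl) powr \<beta> - (xu + b * \<gamma> - u0) powr \<beta>)
        = lam * (prelec \<alpha> p * (xu - xl) powr \<beta>) + - (lam * (xu + b * \<gamma> - u0) powr \<beta>)"
      by (simp add: algebra_simps)
    then show ?thesis unfolding exp_revenue_def accept_prob_def X_def g_def
      by (simp add: exp_add[symmetric] exp_diff)
  qed
  have Geq: "G \<alpha> = {\<gamma>\<in>{gl..gu}. \<forall>\<gamma>'\<in>{gl..gu}. \<gamma>'/(1+X \<alpha>*g \<gamma>') \<le> \<gamma>/(1+X \<alpha>*g \<gamma>)}" for \<alpha>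
    unfolding G_def opt_tariffs_def rev by simp
  have base: "\<forall>\<gamma>\<in>{gl..gu}. 0 \<le> xu + b * \<gamma> - u0" using assms(10) by auto
  have c1: "continuous_on {gl..gu} (\<lambda>\<gamma>. (xu + b*\<gamma> - u0) powr \<beta>)"
    by (rule continuous_on_powr') (use base assms(1) in \<open>auto intro!: continuous_intros\<close>)
  have cont: "continuous_on {gl..gu} g" unfolding g_def
    by (intro continuous_intros c1)
  have mono: "\<forall>x\<in>{gl..gu}. \<forall>y\<in>{gl..gu}. x\<le>y \<longrightarrow> g x \<le> g y"
  proof (intro ballI impI)
    fix x y assume xy: "x \<in> {gl..gu}" "y \<in> {gl..gu}" "x \<le> y"
    have "b * y \<le> b * x" using xy assms(7) by (simp add: mult_left_mono_neg)
    hence "(xu + b * y - u0) powr \<beta> \<le> (xu + b * x - u0) powr \<beta>"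
      using base xy assms(1) by (intro powr_mono2) auto
    hence "lam * (xu + b * y - u0) powr \<beta> \<le> lam * (xu + b * x - u0) powr \<beta>"
      using assms(3) by simp
    thus "g x \<le> g y" unfolding g_def by simp
  qed
  have gpos: "\<forall>x\<in>{gl..gu}. 0 \<le> g x" unfolding g_def by simp
  have X0: "0 \<le> X \<alpha>1" unfolding X_def by simp
  have lnp: "ln (1/2) < ln p" using assms(4) by (subst ln_less_cancel_iff) auto
  have "ln (1/2::real) = - ln 2" by (simp add: ln_div)
  hence q1: "- ln p < 1" using lnp ln_2_less_1 by linarith
  have q0: "0 < - ln p" using assms(4,5) by simp
  have "(- ln p) powr \<alpha>2 \<le> (- ln p) powr \<alpha>1"
    using q0 q1 assms(12) by (intro powr_mono') auto
  hence pr: "prelec \<alpha>1 p \<le> prelec \<alpha>2 p" unfolding prelec_def using assms(4) by auto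
  have "prelec \<alpha>1 p * (xu - xl) powr \<beta> \<le> prelec \<alpha>2 p * (xu - xl) powr \<beta>"
    using pr by (intro mult_right_mono) auto
  hence XX: "X \<alpha>1 \<le> X \<alpha>2" unfolding X_def using assms(3) by simp
  have gen: "Sup (G \<alpha>1) \<in> G \<alpha>1 \<and> Inf (G \<alpha>1) \<in> G \<alpha>1
       \<and> Sup (G \<alpha>2) \<in> G \<alpha>2 \<and> Inf (G \<alpha>2) \<in> G \<alpha>2
       \<and> Sup (G \<alpha>2) \<le> Sup (G \<alpha>1) \<and> Inf (G \<alpha>2) \<le> Inf (G \<alpha>1)"
    unfolding Geq using generic[OF assms(8) _ cont mono gpos X0 XX] assms(9) by simp
  show ?thesis using gen by auto
qed

end
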